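(* Let $G$ be a graph on $n$ nodes with $m$ edges. Then $\sum_{i=1}^k\lambda_i(G)\le m+\binom{k+1}{2}$ holds for every $k\in\{1,\dots,n\}$ if and only if $G$ is spectrally threshold dominated.
   Context: All graphs are finite and simple. For a graph $G$ on $n$ nodes, the Laplacian eigenvalues (eigenvalues of $L(G)=D(G)-A(G)$) are $\lambda_1(G)\ge\dots\ge\lambda_n(G)=0$. A threshold graph is a graph obtainable from the empty graph by repeatedly adding a new node that is either isolated or adjacent to all previously added nodes. A graph $G$ on $n$ nodes with $m$ edges is spectrally threshold dominated if for each $k\in\{1,\dots,n\}$ there is a threshold graph $T_k$ on $n$ nodes with $m$ edges satisfying $\sum_{i=1}^k\lambda_i(T_k)\ge\sum_{i=1}^k\lambda_i(G)$. *)

theory Defs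
  imports "Jordan_Normal_Form.Char_Poly"
begin

definition is_graph :: "nat \<Rightarrow> (nat \<Rightarrow> nat \<Rightarrow> bool) \<Rightarrow> bool" where
  "is_graph n A \<longleftrightarrow> (\<forall>i j. A i j \<longrightarrow> i < n \<and> j < n \<and> i \<noteq> j \<and> A j i)"

definition num_edges :: "nat \<Rightarrow> (nat \<Rightarrow> nat \<Rightarrow> bool) \<Rightarrow> nat" where
  "num_edges n A = card {(i, j). i < j \<and> j < n \<and> A i j}"

definition degree :: "nat \<Rightarrow> (nat \<Rightarrow> nat \<Rightarrow> bool) \<Rightarrow> nat \<Rightarrow> nat" where
  "degree n A i = card {j. j < n \<and> A i j}"

definition laplacian :: "nat \<Rightarrow> (nat \<Rightarrow> nat \<Rightarrow> bool) \<Rightarrow> real mat" where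
  "laplacian n A = mat n n (\<lambda>(i, j). (if i = j then real (degree n A i) else 0)
                                     - (if A i j then 1 else 0))"

definition lap_eigs :: "nat \<Rightarrow> (nat \<Rightarrow> nat \<Rightarrow> bool) \<Rightarrow> real list" where
  "lap_eigs n A = (THE xs. length xs = n \<and> sorted_wrt (\<ge>) xs \<and>
       char_poly (laplacian n A) = (\<Prod>x\<leftarrow>xs. [:- x, 1:]))"

definition lap_sum :: "nat \<Rightarrow> (nat \<Rightarrow> nat \<Rightarrow> bool) \<Rightarrow> nat \<Rightarrow> real" where
  "lap_sum n A k = (\<Sum>i<k. lap_eigs n A ! i)"

text \<open>Threshold graph on {0..<n}: the nodes are added in some order vs!0, vs!1, ...;
  node vs!j is added either isolated (bs!j false) or adjacent to all previously
  added nodes (bs!j true).\<close>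
definition is_threshold :: "nat \<Rightarrow> (nat \<Rightarrow> nat \<Rightarrow> bool) \<Rightarrow> bool" where
  "is_threshold n T \<longleftrightarrow> is_graph n T \<and>
     (\<exists>vs bs. distinct vs \<and> set vs = {0..<n} \<and> length bs = n \<and>
        (\<forall>i<n. \<forall>j<n. T (vs ! i) (vs ! j) \<longleftrightarrow>
             (i < j \<and> bs ! j) \<or> (j < i \<and> bs ! i)))"

definition spectrally_threshold_dominated :: "nat \<Rightarrow> (nat \<Rightarrow> nat \<Rightarrow> bool) \<Rightarrow> bool" where
  "spectrally_threshold_dominated n G \<longleftrightarrow>
     (\<forall>k \<in> {1..n}. \<exists>T. is_threshold n T \<and> num_edges n T = num_edges n G \<and>
        lap_sum n T k \<ge> lap_sum n G k)"

end

theory Submission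
  imports Defs "Jordan_Normal_Form.Schur_Decomposition" "HOL-Combinatorics.List_Permutation"
begin


lemma prod_list_mset_eq:
  fixes f :: "'a \<Rightarrow> 'b::comm_monoid_mult"
  shows "mset xs = mset ys \<Longrightarrow> prod_list (map f xs) = prod_list (map f ys)"
proof -
  assume "mset xs = mset ys"
  then have "mset (map f xs) = mset (map f ys)" by simp
  then show ?thesis by (metis prod_mset_prod_list)
qed

lemma prod_lin_mset:
  fixes xs ys :: "'a :: field list"
  assumes "(\<Prod>x\<leftarrow>xs. [:-x,1:]) = (\<Prod>x\<leftarrow>ys. [:-x,1:])"
  shows "mset xs = mset ys"
  using assms
proof (induction xs arbitrary: ys)
  case Nil
  have "Polynomial.degree (\<Prod>x\<leftarrow>ys. [:-x,1:]) = length ys"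
    using degree_linear_factors[of uminus ys] by simp
  moreover have "Polynomial.degree (\<Prod>x\<leftarrow>ys. [:-x,1:]) = 0"
    by (metis Nil.prems degree_1 list.map(1) prod_list.Nil)
  ultimately show ?case by simp
next
  case (Cons x xs)
  define g where "g = (\<lambda>x::'a. [:-x,1:])"
  have p: "prod_list (map g (x#xs)) = prod_list (map g ys)" using Cons.prems unfolding g_def .
  have "poly (g x) x = 0" unfolding g_def by simp
  then have "poly (prod_list (map g (x#xs))) x = 0" by simp
  then have "poly (prod_list (map g ys)) x = 0" unfolding p .
  then have "prod_list (map (\<lambda>p. poly p x) (map g ys)) = 0" by (simp only: poly_prod_list)
  then obtain y where "y \<in> set ys" "poly (g y) x = 0" unfolding prod_list_zero_iff by auto
  then have "x \<in> set ys" unfolding g_def by simp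
  then have m: "mset ys = mset (x # remove1 x ys)" by simp
  have e1: "prod_list (map g ys) = g x * prod_list (map g (remove1 x ys))"
    using prod_list_mset_eq[OF m, of g] by simp
  have "g x * prod_list (map g xs) = prod_list (map g ys)"
    using p by (simp only: list.map prod_list.Cons)
  also note e1
  finally have "g x * prod_list (map g xs) = g x * prod_list (map g (remove1 x ys))" .
  moreover have "g x \<noteq> 0" unfolding g_def by simp
  ultimately have "prod_list (map g xs) = prod_list (map g (remove1 x ys))" by simp
  then have "(\<Prod>x\<leftarrow>xs. [:-x,1:]) = (\<Prod>x\<leftarrow>remove1 x ys. [:-x,1:])" unfolding g_def .
  from Cons.IH[OF this] have h: "mset xs = mset (remove1 x ys)" .
  have "mset (x#xs) = mset (x # remove1 x ys)" by (simp only: mset.simps(2) h)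
  then show ?case using m by (rule trans[OF _ sym])
qed

lemma sorted_desc_unique:
  fixes xs ys :: "'a :: linorder list"
  assumes "sorted_wrt (\<ge>) xs" "sorted_wrt (\<ge>) ys" "mset xs = mset ys"
  shows "xs = ys"
proof -
  have "sorted (rev xs)" "sorted (rev ys)" using assms by (simp_all add: sorted_wrt_rev)
  then have "sort (rev ys) = rev xs" "sort (rev ys) = rev ys"
    using assms(3) by (simp_all add: properties_for_sort)
  then show ?thesis by simp
qed

lemma lap_eigs_eqI:
  assumes "length xs = n" "sorted_wrt (\<ge>) xs" "char_poly (laplacian n A) = (\<Prod>x\<leftarrow>xs. [:- x, 1:])"
  shows "lap_eigs n A = xs"
  unfolding lap_eigs_def
proof (rule the_equality)
  show "length xs = n \<and> sorted_wrt (\<ge>) xs \<and> char_poly (laplacian n A) = (\<Prod>x\<leftarrow>xs. [:- x, 1:])"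
    using assms by simp
  fix ys assume a: "length ys = n \<and> sorted_wrt (\<ge>) ys \<and> char_poly (laplacian n A) = (\<Prod>x\<leftarrow>ys. [:- x, 1:])"
  then have "(\<Prod>x\<leftarrow>ys. [:- x, 1:]) = (\<Prod>x\<leftarrow>xs. [:- x, 1:])" using assms(3) by simp
  then have "mset ys = mset xs" by (rule prod_lin_mset)
  then show "ys = xs" using assms(2) a sorted_desc_unique by blast
qed

lemma lap_eigs_perm:
  assumes "length zs = n" "char_poly (laplacian n A) = (\<Prod>x\<leftarrow>zs. [:- x, 1:])"
  shows "mset (lap_eigs n A) = mset zs" "sorted_wrt (\<ge>) (lap_eigs n A)" "length (lap_eigs n A) = n"
proof -
  let ?xs = "rev (sort zs)"
  have m: "mset ?xs = mset zs" by simp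
  have s: "sorted_wrt (\<ge>) ?xs" by (simp add: sorted_wrt_rev)
  have "(\<Prod>x\<leftarrow>?xs. [:- x, 1:]) = (\<Prod>x\<leftarrow>zs. [:- x, 1:])"
    by (rule prod_list_mset_eq[OF m])
  then have "lap_eigs n A = ?xs" using assms s by (intro lap_eigs_eqI) auto
  then show "mset (lap_eigs n A) = mset zs" "sorted_wrt (\<ge>) (lap_eigs n A)" "length (lap_eigs n A) = n"
    using m s assms(1) by auto
qed




lemma char_poly_eigenbasis:
  fixes A :: "real mat" and w :: "nat \<Rightarrow> nat \<Rightarrow> real" and mu :: "nat \<Rightarrow> real"
  assumes A: "A \<in> carrier_mat n n"
    and eig: "\<And>j x. j < n \<Longrightarrow> x < n \<Longrightarrow> (\<Sum>y = 0..<n. A $$ (x,y) * w j y) = mu j * w j x"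
    and orth: "\<And>j k. j < n \<Longrightarrow> k < n \<Longrightarrow> j \<noteq> k \<Longrightarrow> (\<Sum>x = 0..<n. w j x * w k x) = 0"
    and nz: "\<And>j. j < n \<Longrightarrow> (\<Sum>x = 0..<n. w j x * w j x) \<noteq> 0"
  shows "char_poly A = (\<Prod>j\<leftarrow>[0..<n]. [:- mu j, 1:])"
proof -
  define N where "N j = (\<Sum>x = 0..<n. w j x * w j x)" for j
  define P where "P = mat n n (\<lambda>(x,j). w j x)"
  define Q where "Q = mat n n (\<lambda>(j,x). w j x / N j)"
  define D where "D = mat n n (\<lambda>(i,j). if i = j then mu i else 0)"
  have cP: "P \<in> carrier_mat n n" and cQ: "Q \<in> carrier_mat n n" and cD: "D \<in> carrier_mat n n"
    unfolding P_def Q_def D_def by auto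
  have QP: "Q * P = 1\<^sub>m n"
  proof (rule eq_matI)
    fix j k assume j: "j < dim_row (1\<^sub>m n :: real mat)" and k: "k < dim_col (1\<^sub>m n :: real mat)"
    then have jn: "j < n" and kn: "k < n" by auto
    have "(Q * P) $$ (j,k) = (\<Sum>x = 0..<n. (w j x / N j) * w k x)"
      using jn kn unfolding P_def Q_def by (simp add: scalar_prod_def)
    also have "\<dots> = (\<Sum>x = 0..<n. w j x * w k x) / N j"
      by (simp add: sum_divide_distrib)
    also have "\<dots> = (if j = k then 1 else 0)"
      using orth[OF jn kn] nz[OF jn] unfolding N_def by auto
    finally show "(Q * P) $$ (j,k) = 1\<^sub>m n $$ (j,k)" using jn kn by simp
  qed (auto simp: P_def Q_def)
  have PQ: "P * Q = 1\<^sub>m n" by (rule mat_mult_left_right_inverse[OF cQ cP QP])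
  have AP: "A * P = P * D"
  proof (rule eq_matI)
    fix x j assume x: "x < dim_row (P * D)" and j: "j < dim_col (P * D)"
    then have xn: "x < n" and jn: "j < n" using cP cD by auto
    have "(A * P) $$ (x,j) = (\<Sum>y = 0..<n. A $$ (x,y) * w j y)"
      using xn jn A unfolding P_def by (simp add: scalar_prod_def)
    also have "\<dots> = mu j * w j x" by (rule eig[OF jn xn])
    also have "\<dots> = (\<Sum>i = 0..<n. w i x * (if i = j then mu i else 0))"
      using jn by (simp add: if_distrib cong: if_cong)
    also have "\<dots> = (P * D) $$ (x,j)"
      using xn jn unfolding P_def D_def by (simp add: scalar_prod_def)
    finally show "(A * P) $$ (x,j) = (P * D) $$ (x,j)" .
  qed (use A cP cD in auto)
  have "A = A * (P * Q)" using A PQ by simp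
  also have "\<dots> = (A * P) * Q" using A cP cQ by simp
  also have "\<dots> = P * D * Q" unfolding AP ..
  finally have "A = P * D * Q" .
  then have "similar_mat A D" by (intro similar_matI[of A D P Q n]) (use A cP cQ cD PQ QP in auto)
  then have "char_poly A = char_poly D" by (rule char_poly_similar)
  also have "\<dots> = (\<Prod>a\<leftarrow>diag_mat D. [:- a, 1:])"
    by (rule char_poly_upper_triangular[OF cD]) (auto simp: upper_triangular_def D_def)
  also have "diag_mat D = map mu [0..<n]" unfolding diag_mat_def D_def by simp
  finally show ?thesis by (simp add: o_def)
qed




lemma lap_entry:
  "x < n \<Longrightarrow> y < n \<Longrightarrow> laplacian n A $$ (x,y) =
     (if x = y then real (degree n A x) else 0) - (if A x y then 1 else 0)"
  unfolding laplacian_def by simp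

lemma degree_sum: "real (degree n A x) = (\<Sum>y = 0..<n. if A x y then 1 else 0)"
proof -
  have "{j. j < n \<and> A x j} = {y \<in> {0..<n}. A x y}" by auto
  then show ?thesis unfolding degree_def by (simp add: sum.If_cases Int_def)
qed

lemma lap_apply:
  assumes "x < n"
  shows "(\<Sum>y = 0..<n. laplacian n A $$ (x,y) * f y) = (\<Sum>y = 0..<n. if A x y then f x - f y else 0)"
proof -
  have "(\<Sum>y = 0..<n. laplacian n A $$ (x,y) * f y) =
        (\<Sum>y = 0..<n. (if x = y then real (degree n A x) else 0) * f y - (if A x y then f y else 0))"
    by (rule sum.cong) (auto simp: lap_entry assms left_diff_distrib)
  also have "\<dots> = (\<Sum>y = 0..<n. (if x = y then real (degree n A x) else 0) * f y) - (\<Sum>y = 0..<n. (if A x y then f y else 0))"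
    by (rule sum_subtractf)
  also have "(\<Sum>y = 0..<n. (if x = y then real (degree n A x) else 0) * f y) = (\<Sum>y = 0..<n. if x = y then real (degree n A x) * f x else 0)"
    by (rule sum.cong) auto
  also have "\<dots> = real (degree n A x) * f x" using assms by (simp add: sum.delta)
  also have "real (degree n A x) * f x = (\<Sum>y = 0..<n. if A x y then f x else 0)"
    unfolding degree_sum sum_distrib_right by (rule sum.cong) auto
  also have "(\<Sum>y = 0..<n. if A x y then f x else 0) - (\<Sum>y = 0..<n. (if A x y then f y else 0))
      = (\<Sum>y = 0..<n. if A x y then f x - f y else 0)"
    by (simp add: sum_subtractf[symmetric]) (rule sum.cong, auto)
  finally show ?thesis .
qed

lemma sum_split3:
  fixes F :: "nat \<Rightarrow> 'a :: comm_monoid_add"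
  assumes "j < n"
  shows "(\<Sum>q = 0..<n. F q) = (\<Sum>q = 0..<j. F q) + F j + (\<Sum>q = Suc j..<n. F q)"
proof -
  have "(\<Sum>q = 0..<n. F q) = (\<Sum>q = 0..<Suc j. F q) + (\<Sum>q = Suc j..<n. F q)"
    using sum.atLeastLessThan_concat[of 0 "Suc j" n F] assms by simp
  then show ?thesis by simp
qed

definition cnt :: "(nat \<Rightarrow> bool) \<Rightarrow> nat \<Rightarrow> nat \<Rightarrow> nat" where
  "cnt b n j = card {u \<in> {Suc j..<n}. b u}"

definition mu :: "(nat \<Rightarrow> bool) \<Rightarrow> nat \<Rightarrow> nat \<Rightarrow> nat" where
  "mu b n j = (if j = 0 then 0 else cnt b n j + (if b j then j + 1 else 0))"

definition wp :: "nat \<Rightarrow> nat \<Rightarrow> real" where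
  "wp j q = (if j = 0 then 1 else if q < j then 1 else if q = j then - real j else 0)"

definition tp :: "(nat \<Rightarrow> bool) \<Rightarrow> nat \<Rightarrow> nat \<Rightarrow> bool" where
  "tp b i q \<longleftrightarrow> (i < q \<and> b q) \<or> (q < i \<and> b i)"

lemma cnt_sum: "(\<Sum>q = Suc j..<n. if b q then (c::real) else 0) = real (cnt b n j) * c"
  unfolding cnt_def by (simp add: sum.If_cases Int_def)

lemma wp_eig:
  assumes j: "j < n" and i: "i < n"
  shows "(\<Sum>q = 0..<n. if tp b i q then wp j i - wp j q else 0) = real (mu b n j) * wp j i"
proof (cases "j = 0")
  case True
  then show ?thesis by (simp add: wp_def mu_def)
next
  case False
  let ?F = "\<lambda>q. if tp b i q then wp j i - wp j q else 0"
  have split: "(\<Sum>q = 0..<n. ?F q) = (\<Sum>q = 0..<j. ?F q) + ?F j + (\<Sum>q = Suc j..<n. ?F q)"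
    by (rule sum_split3[OF j])
  consider "j < i" | "i < j" | "i = j" by linarith
  then show ?thesis
  proof cases
    case 1
    have a: "(\<Sum>q = 0..<j. ?F q) = (\<Sum>q = 0..<j. if b i then -1 else 0)"
      by (rule sum.cong) (use 1 False in \<open>auto simp: tp_def wp_def\<close>)
    have c: "(\<Sum>q = Suc j..<n. ?F q) = 0"
      by (rule sum.neutral) (use 1 False in \<open>auto simp: tp_def wp_def\<close>)
    have bb: "?F j = (if b i then real j else 0)" using 1 False by (auto simp: tp_def wp_def)
    show ?thesis unfolding split a c bb using 1 False by (simp add: wp_def)
  next
    case 2
    have a: "(\<Sum>q = 0..<j. ?F q) = 0"
      by (rule sum.neutral) (use 2 False in \<open>auto simp: tp_def wp_def\<close>)
    have c: "(\<Sum>q = Suc j..<n. ?F q) = (\<Sum>q = Suc j..<n. if b q then 1 else 0)"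
      by (rule sum.cong) (use 2 False in \<open>auto simp: tp_def wp_def\<close>)
    have bb: "?F j = (if b j then real j + 1 else 0)" using 2 False by (auto simp: tp_def wp_def)
    show ?thesis unfolding split a c bb cnt_sum using 2 False by (simp add: wp_def mu_def)
  next
    case 3
    have a: "(\<Sum>q = 0..<j. ?F q) = (\<Sum>q = 0..<j. if b j then - real j - 1 else 0)"
      by (rule sum.cong) (use 3 False in \<open>auto simp: tp_def wp_def\<close>)
    have c: "(\<Sum>q = Suc j..<n. ?F q) = (\<Sum>q = Suc j..<n. if b q then - real j else 0)"
      by (rule sum.cong) (use 3 False in \<open>auto simp: tp_def wp_def\<close>)
    have bb: "?F j = 0" using 3 by (auto simp: tp_def)
    show ?thesis unfolding split a c bb cnt_sum using 3 False
      by (simp add: wp_def mu_def algebra_simps)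
  qed
qed

lemma sum_wp0:
  assumes "0 < j" "j < n"
  shows "(\<Sum>q = 0..<n. wp j q) = 0"
proof -
  have "(\<Sum>q = 0..<n. wp j q) = (\<Sum>q = 0..<j. wp j q) + wp j j + (\<Sum>q = Suc j..<n. wp j q)"
    by (rule sum_split3[OF assms(2)])
  also have "(\<Sum>q = 0..<j. wp j q) = real j" using assms by (simp add: wp_def)
  also have "(\<Sum>q = Suc j..<n. wp j q) = 0" using assms by (intro sum.neutral) (auto simp: wp_def)
  finally show ?thesis using assms by (simp add: wp_def)
qed

lemma wp_orth:
  assumes "j < k" "k < n"
  shows "(\<Sum>q = 0..<n. wp j q * wp k q) = 0"
proof (cases "j = 0")
  case True
  then have "(\<Sum>q = 0..<n. wp j q * wp k q) = (\<Sum>q = 0..<n. wp k q)" by (simp add: wp_def)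
  then show ?thesis using sum_wp0[of k n] assms by simp
next
  case False
  have "(\<Sum>q = 0..<n. wp j q * wp k q) = (\<Sum>q = 0..<n. wp j q)"
    by (rule sum.cong) (use assms False in \<open>auto simp: wp_def\<close>)
  then show ?thesis using sum_wp0[of j n] assms False by simp
qed

lemma wp_norm:
  assumes "j < n"
  shows "(\<Sum>q = 0..<n. wp j q * wp j q) \<noteq> 0"
proof -
  have "wp j j * wp j j \<le> (\<Sum>q = 0..<n. wp j q * wp j q)"
    by (rule member_le_sum) (use assms in auto)
  moreover have "wp j j * wp j j > 0" by (simp add: wp_def)
  ultimately show ?thesis by linarith
qed




lemma threshold_char_poly:
  assumes vs: "distinct vs" "set vs = {0..<n}" "length vs = n"
    and T: "\<forall>i<n. \<forall>j<n. T (vs!i) (vs!j) \<longleftrightarrow> tp b i j"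
  shows "char_poly (laplacian n T) = (\<Prod>j\<leftarrow>[0..<n]. [:- real (mu b n j), 1:])"
proof -
  have bij0: "bij_betw ((!) vs) {..<length vs} (set vs)"
    by (rule bij_betw_nth[OF vs(1) refl refl])
  have e: "{..<length vs} = {0..<n}" using vs(3) by auto
  have bij: "bij_betw ((!) vs) {0..<n} {0..<n}"
    using bij0 unfolding e vs(2) .
  have inj: "inj_on ((!) vs) {0..<n}" using bij by (rule bij_betw_imp_inj_on)
  have img: "(!) vs ` {0..<n} = {0..<n}" using bij by (rule bij_betw_imp_surj_on)
  define pos where "pos = the_inv_into {0..<n} ((!) vs)"
  have inimg: "x \<in> (!) vs ` {0..<n}" if "x < n" for x
    using img that by simp
  have pos_lt: "pos x < n" if "x < n" for x
  proof -
    have "pos x \<in> {0..<n}" unfolding pos_def by (rule the_inv_into_into[OF inj inimg[OF that]]) simp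
    then show ?thesis by simp
  qed
  have vs_pos: "vs ! (pos x) = x" if "x < n" for x
    unfolding pos_def by (rule f_the_inv_into_f[OF inj inimg[OF that]])
  have pos_vs: "pos (vs ! q) = q" if "q < n" for q
    unfolding pos_def by (rule the_inv_into_f_f[OF inj]) (use that in simp)
  have reind: "(\<Sum>y = 0..<n. g y) = (\<Sum>q = 0..<n. g (vs ! q))" for g :: "nat \<Rightarrow> real"
    by (rule sum.reindex_bij_betw[OF bij, symmetric])
  define w where "w j x = wp j (pos x)" for j x
  show ?thesis
  proof (rule char_poly_eigenbasis[of _ n w])
    show "laplacian n T \<in> carrier_mat n n" unfolding laplacian_def by simp
  next
    fix j x assume j: "j < n" and x: "x < n"
    have "(\<Sum>y = 0..<n. laplacian n T $$ (x, y) * w j y) = (\<Sum>y = 0..<n. if T x y then w j x - w j y else 0)"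
      by (rule lap_apply[OF x])
    also have "\<dots> = (\<Sum>q = 0..<n. if T x (vs!q) then w j x - w j (vs!q) else 0)"
      by (rule reind)
    also have "\<dots> = (\<Sum>q = 0..<n. if tp b (pos x) q then wp j (pos x) - wp j q else 0)"
    proof (rule sum.cong)
      fix q assume "q \<in> {0..<n}"
      then have q: "q < n" by simp
      have "T x (vs!q) = T (vs ! pos x) (vs ! q)" using vs_pos[OF x] by simp
      also have "\<dots> = tp b (pos x) q" using T pos_lt[OF x] q by blast
      finally show "(if T x (vs!q) then w j x - w j (vs!q) else 0) = (if tp b (pos x) q then wp j (pos x) - wp j q else 0)"
        unfolding w_def using pos_vs[OF q] by simp
    qed simp
    also have "\<dots> = real (mu b n j) * w j x" unfolding w_def by (rule wp_eig[OF j pos_lt[OF x]])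
    finally show "(\<Sum>y = 0..<n. laplacian n T $$ (x, y) * w j y) = real (mu b n j) * w j x" .
  next
    fix j k assume j: "j < n" and k: "k < n" and jk: "j \<noteq> k"
    have "(\<Sum>x = 0..<n. w j x * w k x) = (\<Sum>q = 0..<n. w j (vs!q) * w k (vs!q))"
      by (rule reind)
    also have "\<dots> = (\<Sum>q = 0..<n. wp j q * wp k q)"
      unfolding w_def by (rule sum.cong) (auto simp: pos_vs)
    also have "\<dots> = 0"
    proof (cases "j < k")
      case True then show ?thesis using wp_orth k by blast
    next
      case False then have "k < j" using jk by simp
      then show ?thesis using wp_orth[of k j n] j by (simp add: mult.commute)
    qed
    finally show "(\<Sum>x = 0..<n. w j x * w k x) = 0" .
  next
    fix j assume j: "j < n"
    have "(\<Sum>x = 0..<n. w j x * w j x) = (\<Sum>q = 0..<n. w j (vs!q) * w j (vs!q))"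
      by (rule reind)
    also have "\<dots> = (\<Sum>q = 0..<n. wp j q * wp j q)"
      unfolding w_def by (rule sum.cong) (auto simp: pos_vs)
    finally have "(\<Sum>x = 0..<n. w j x * w j x) = (\<Sum>q = 0..<n. wp j q * wp j q)" .
    then show "(\<Sum>x = 0..<n. w j x * w j x) \<noteq> 0" using wp_norm[OF j] by argo
  qed
qed




lemma lap_apply_c:
  assumes "x < n"
  shows "(\<Sum>y = 0..<n. complex_of_real (laplacian n A $$ (x,y)) * f y) = (\<Sum>y = 0..<n. if A x y then f x - f y else 0)"
proof -
  have "(\<Sum>y = 0..<n. complex_of_real (laplacian n A $$ (x,y)) * f y) =
        (\<Sum>y = 0..<n. (if x = y then of_real (real (degree n A x)) else 0) * f y - (if A x y then f y else 0))"
    by (rule sum.cong) (auto simp: lap_entry assms left_diff_distrib)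
  also have "\<dots> = (\<Sum>y = 0..<n. (if x = y then of_real (real (degree n A x)) else 0) * f y) - (\<Sum>y = 0..<n. (if A x y then f y else 0))"
    by (rule sum_subtractf)
  also have "(\<Sum>y = 0..<n. (if x = y then of_real (real (degree n A x)) else 0) * f y) = (\<Sum>y = 0..<n. if x = y then of_real (real (degree n A x)) * f x else 0)"
    by (rule sum.cong) auto
  also have "\<dots> = of_real (real (degree n A x)) * f x" using assms by (simp add: sum.delta)
  also have "of_real (real (degree n A x)) * f x = (\<Sum>y = 0..<n. if A x y then f x else 0)"
    unfolding degree_sum of_real_sum sum_distrib_right by (rule sum.cong) auto
  also have "(\<Sum>y = 0..<n. if A x y then f x else 0) - (\<Sum>y = 0..<n. (if A x y then f y else 0))
      = (\<Sum>y = 0..<n. if A x y then f x - f y else 0)"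
    by (simp add: sum_subtractf[symmetric]) (rule sum.cong, auto)
  finally show ?thesis .
qed

lemma quad_form:
  fixes f :: "nat \<Rightarrow> complex"
  assumes g: "is_graph n A"
  shows "2 * (\<Sum>x = 0..<n. cnj (f x) * (\<Sum>y = 0..<n. if A x y then f x - f y else 0))
       = of_real (\<Sum>x = 0..<n. \<Sum>y = 0..<n. if A x y then (cmod (f x - f y))^2 else 0)"
proof -
  define X where "X = (\<Sum>x = 0..<n. \<Sum>y = 0..<n. if A x y then cnj (f x) * (f x - f y) else 0)"
  have X1: "(\<Sum>x = 0..<n. cnj (f x) * (\<Sum>y = 0..<n. if A x y then f x - f y else 0)) = X"
    unfolding X_def sum_distrib_left by (rule sum.cong, simp, rule sum.cong, auto)
  have "X = (\<Sum>y = 0..<n. \<Sum>x = 0..<n. if A x y then cnj (f x) * (f x - f y) else 0)"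
    unfolding X_def by (rule sum.swap)
  also have "\<dots> = (\<Sum>x = 0..<n. \<Sum>y = 0..<n. if A x y then cnj (f y) * (f y - f x) else 0)"
    using g unfolding is_graph_def by (intro sum.cong refl) auto
  finally have X2: "X = (\<Sum>x = 0..<n. \<Sum>y = 0..<n. if A x y then cnj (f y) * (f y - f x) else 0)" .
  have "2 * X = X + X" by simp
  also have "\<dots> = (\<Sum>x = 0..<n. \<Sum>y = 0..<n. if A x y then cnj (f x) * (f x - f y) + cnj (f y) * (f y - f x) else 0)"
    by (subst X_def, subst X2) (simp add: sum.distrib[symmetric] if_distrib cong: if_cong)
  also have "\<dots> = (\<Sum>x = 0..<n. \<Sum>y = 0..<n. of_real (if A x y then (cmod (f x - f y))^2 else 0))"
  proof (intro sum.cong refl)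
    fix x y
    have "cnj (f x) * (f x - f y) + cnj (f y) * (f y - f x) = (f x - f y) * cnj (f x - f y)"
      by (simp add: algebra_simps)
    also have "\<dots> = of_real ((cmod (f x - f y))^2)" by (rule complex_norm_square[symmetric])
    finally show "(if A x y then cnj (f x) * (f x - f y) + cnj (f y) * (f y - f x) else 0) = of_real (if A x y then (cmod (f x - f y))^2 else 0)"
      by simp
  qed
  also have "\<dots> = of_real (\<Sum>x = 0..<n. \<Sum>y = 0..<n. if A x y then (cmod (f x - f y))^2 else 0)"
    by (simp add: of_real_sum)
  finally show ?thesis unfolding X1 .
qed

lemma all_pairs:
  fixes f :: "nat \<Rightarrow> complex"
  shows "(\<Sum>x = 0..<n. \<Sum>y = 0..<n. (cmod (f x - f y))^2)
       = 2 * real n * (\<Sum>x = 0..<n. (cmod (f x))^2) - 2 * (cmod (\<Sum>x = 0..<n. f x))^2"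
proof -
  let ?N = "\<Sum>x = 0..<n. (cmod (f x))^2"
  have t: "complex_of_real ((cmod (a - b))^2) = (a * cnj a + b * cnj b) - (a * cnj b + b * cnj a)" for a b :: complex
    unfolding complex_norm_square by (simp add: ring_distribs)
  have "complex_of_real (\<Sum>x = 0..<n. \<Sum>y = 0..<n. (cmod (f x - f y))^2)
      = (\<Sum>x = 0..<n. \<Sum>y = 0..<n. (f x * cnj (f x) + f y * cnj (f y)) - (f x * cnj (f y) + f y * cnj (f x)))"
    unfolding of_real_sum t ..
  also have "\<dots> = (\<Sum>x = 0..<n. \<Sum>y = 0..<n. f x * cnj (f x) + f y * cnj (f y)) - (\<Sum>x = 0..<n. \<Sum>y = 0..<n. f x * cnj (f y) + f y * cnj (f x))"
    by (simp only: sum_subtractf)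
  also have "(\<Sum>x = 0..<n. \<Sum>y = 0..<n. f x * cnj (f x) + f y * cnj (f y)) = 2 * of_nat n * of_real ?N"
  proof -
    have S: "of_real ?N = (\<Sum>x = 0..<n. f x * cnj (f x))"
      unfolding of_real_sum by (intro sum.cong refl) (rule complex_norm_square)
    have "(\<Sum>x = 0..<n. \<Sum>y = 0..<n. f x * cnj (f x) + f y * cnj (f y))
        = (\<Sum>x = 0..<n. (\<Sum>y = 0..<n. f x * cnj (f x)) + (\<Sum>y = 0..<n. f y * cnj (f y)))"
      by (simp only: sum.distrib)
    also have "\<dots> = (\<Sum>x = 0..<n. of_nat n * (f x * cnj (f x)) + (\<Sum>y = 0..<n. f y * cnj (f y)))"
      by simp
    also have "\<dots> = of_nat n * (\<Sum>x = 0..<n. f x * cnj (f x)) + of_nat n * (\<Sum>y = 0..<n. f y * cnj (f y))"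
      by (simp only: sum.distrib sum_distrib_left[symmetric]) simp
    finally show ?thesis unfolding S by simp
  qed
  also have "(\<Sum>x = 0..<n. \<Sum>y = 0..<n. f x * cnj (f y) + f y * cnj (f x)) = 2 * ((\<Sum>x = 0..<n. f x) * cnj (\<Sum>x = 0..<n. f x))"
  proof -
    have a: "(\<Sum>x = 0..<n. \<Sum>y = 0..<n. f x * cnj (f y)) = (\<Sum>x = 0..<n. f x) * cnj (\<Sum>x = 0..<n. f x)"
      unfolding cnj_sum sum_product ..
    have b: "(\<Sum>x = 0..<n. \<Sum>y = 0..<n. f y * cnj (f x)) = (\<Sum>x = 0..<n. \<Sum>y = 0..<n. f x * cnj (f y))"
      by (rule sum.swap)
    show ?thesis by (simp only: sum.distrib a b) simp
  qed
  also have "(\<Sum>x = 0..<n. f x) * cnj (\<Sum>x = 0..<n. f x) = of_real ((cmod (\<Sum>x = 0..<n. f x))^2)"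
    by (rule complex_norm_square[symmetric])
  finally have "complex_of_real (\<Sum>x = 0..<n. \<Sum>y = 0..<n. (cmod (f x - f y))^2)
      = complex_of_real (2 * real n * ?N - 2 * (cmod (\<Sum>x = 0..<n. f x))^2)" by simp
  then show ?thesis using of_real_eq_iff by blast
qed


lemma lap_eig_real:
  assumes g: "is_graph n A"
    and z: "poly (char_poly (map_mat complex_of_real (laplacian n A))) z = 0"
  shows "\<exists>r. z = of_real r \<and> 0 \<le> r \<and> r \<le> real n"
proof -
  define L where "L = laplacian n A"
  define Lc where "Lc = map_mat complex_of_real L"
  have cL: "Lc \<in> carrier_mat n n" unfolding Lc_def L_def laplacian_def by simp
  have "eigenvalue Lc z" using z eigenvalue_root_char_poly[OF cL] unfolding Lc_def L_def by simp
  then obtain v where ev: "eigenvector Lc v z" unfolding eigenvalue_def by blast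
  then have v: "v \<in> carrier_vec n" "v \<noteq> 0\<^sub>v n" "Lc *\<^sub>v v = z \<cdot>\<^sub>v v"
    unfolding eigenvector_def using cL by auto
  define f where "f x = v $ x" for x
  have dv: "dim_vec v = n" using v(1) by simp
  have eqx: "(\<Sum>y = 0..<n. if A x y then f x - f y else 0) = z * f x" if x: "x < n" for x
  proof -
    have "(Lc *\<^sub>v v) $ x = (\<Sum>y = 0..<n. complex_of_real (L $$ (x,y)) * f y)"
      using x cL dv unfolding Lc_def f_def L_def laplacian_def by (simp add: scalar_prod_def)
    also have "\<dots> = (\<Sum>y = 0..<n. if A x y then f x - f y else 0)"
      unfolding L_def by (rule lap_apply_c[OF x])
    finally show ?thesis using v(3) x dv unfolding f_def by simp
  qed
  define N where "N = (\<Sum>x = 0..<n. (cmod (f x))^2)"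
  define Q where "Q = (\<Sum>x = 0..<n. \<Sum>y = 0..<n. if A x y then (cmod (f x - f y))^2 else 0)"
  have "2 * (\<Sum>x = 0..<n. cnj (f x) * (z * f x)) = of_real Q"
    unfolding Q_def using quad_form[OF g, of f] eqx by simp
  moreover have "(\<Sum>x = 0..<n. cnj (f x) * (z * f x)) = z * of_real N"
    unfolding N_def of_real_sum sum_distrib_left
  proof (intro sum.cong refl)
    fix x
    have "cnj (f x) * (z * f x) = z * (f x * cnj (f x))" by simp
    also have "\<dots> = z * of_real ((cmod (f x))^2)" by (simp only: complex_norm_square)
    finally show "cnj (f x) * (z * f x) = z * of_real ((cmod (f x))^2)" .
  qed
  ultimately have zN: "2 * z * of_real N = of_real Q" by (simp add: mult.assoc)
  have Npos: "N > 0"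
  proof -
    obtain x where x: "x < n" "f x \<noteq> 0"
      using v(1,2) unfolding f_def by (metis dv eq_vecI index_zero_vec(1) index_zero_vec(2))
    have "(cmod (f x))^2 \<le> N" unfolding N_def by (rule member_le_sum) (use x in auto)
    moreover have "(cmod (f x))^2 > 0" using x by simp
    ultimately show ?thesis by linarith
  qed
  have Q0: "Q \<ge> 0" unfolding Q_def by (intro sum_nonneg) auto
  have "Q \<le> (\<Sum>x = 0..<n. \<Sum>y = 0..<n. (cmod (f x - f y))^2)"
    unfolding Q_def by (intro sum_mono) auto
  also have "\<dots> = 2 * real n * N - 2 * (cmod (\<Sum>x = 0..<n. f x))^2"
    unfolding N_def by (rule all_pairs)
  also have "\<dots> \<le> 2 * real n * N" by simp
  finally have Qn: "Q \<le> 2 * real n * N" .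
  define r where "r = Q / (2 * N)"
  have "z = of_real r"
  proof -
    have "z = of_real Q / (2 * of_real N)" using zN Npos by (simp add: field_simps)
    then show ?thesis unfolding r_def by simp
  qed
  moreover have "0 \<le> r" unfolding r_def using Q0 Npos by simp
  moreover have "r \<le> real n" unfolding r_def using Qn Npos by (simp add: field_simps)
  ultimately show ?thesis by blast
qed




lemma lap_eigs_general:
  assumes g: "is_graph n A"
  shows "\<exists>rs. length rs = n \<and> char_poly (laplacian n A) = (\<Prod>x\<leftarrow>rs. [:- x, 1:]) \<and> (\<forall>r\<in>set rs. 0 \<le> r \<and> r \<le> real n)"
proof -
  define L where "L = laplacian n A"
  have cL: "L \<in> carrier_mat n n" unfolding L_def laplacian_def by simp
  have cp: "char_poly (map_mat complex_of_real L) = map_poly of_real (char_poly L)"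
    by (rule of_real_hom.char_poly_hom[OF cL])
  have cLc: "map_mat complex_of_real L \<in> carrier_mat n n" using cL by simp
  obtain zs where zs: "char_poly (map_mat complex_of_real L) = (\<Prod>a\<leftarrow>zs. [:- a, 1:])" "length zs = n"
    using char_poly_factorized[OF cLc] by blast
  have zr: "\<exists>r. z = of_real r \<and> 0 \<le> r \<and> r \<le> real n" if "z \<in> set zs" for z
  proof -
    have "poly (\<Prod>a\<leftarrow>zs. [:- a, 1:]) z = 0"
      using that by (simp add: poly_prod_list prod_list_zero_iff)
    then show ?thesis using lap_eig_real[OF g, of z] zs(1) unfolding L_def by simp
  qed
  define rs where "rs = map Re zs"
  have zs_eq: "zs = map complex_of_real rs"
    unfolding rs_def by (rule nth_equalityI) (auto dest!: nth_mem[THEN zr])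
  interpret m: map_poly_inj_idom_hom "of_real :: real \<Rightarrow> complex" ..
  have "map_poly of_real (char_poly L) = (\<Prod>a\<leftarrow>map complex_of_real rs. [:- a, 1:])"
    using zs(1) cp zs_eq by simp
  also have "\<dots> = map_poly of_real (\<Prod>a\<leftarrow>rs. [:- a, 1:])"
    by (simp add: m.hom_prod_list o_def)
  finally have "char_poly L = (\<Prod>a\<leftarrow>rs. [:- a, 1:])" by (rule m.injectivity)
  moreover have "length rs = n" using zs(2) rs_def by simp
  moreover have "\<forall>r\<in>set rs. 0 \<le> r \<and> r \<le> real n"
  proof
    fix r assume "r \<in> set rs"
    then have "complex_of_real r \<in> set zs" using zs_eq by simp
    from zr[OF this] obtain r' where "complex_of_real r = of_real r'" "0 \<le> r'" "r' \<le> real n" by blast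
    then show "0 \<le> r \<and> r \<le> real n" by simp
  qed
  ultimately show ?thesis unfolding L_def by blast
qed




lemma trace_comm:
  fixes X Y :: "'a :: comm_ring_1 mat"
  assumes "X \<in> carrier_mat n n" "Y \<in> carrier_mat n n"
  shows "(\<Sum>i = 0..<n. (X * Y) $$ (i,i)) = (\<Sum>i = 0..<n. (Y * X) $$ (i,i))"
proof -
  have "(\<Sum>i = 0..<n. (X * Y) $$ (i,i)) = (\<Sum>i = 0..<n. \<Sum>k = 0..<n. X $$ (i,k) * Y $$ (k,i))"
    using assms by (intro sum.cong refl) (simp add: scalar_prod_def)
  also have "\<dots> = (\<Sum>k = 0..<n. \<Sum>i = 0..<n. X $$ (i,k) * Y $$ (k,i))" by (rule sum.swap)
  also have "\<dots> = (\<Sum>k = 0..<n. (Y * X) $$ (k,k))"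
    using assms by (intro sum.cong refl) (simp add: scalar_prod_def mult.commute)
  finally show ?thesis .
qed

lemma trace_eig:
  fixes A :: "real mat"
  assumes cA: "A \<in> carrier_mat n n" and cp: "char_poly A = (\<Prod>x\<leftarrow>xs. [:- x, 1:])"
  shows "sum_list xs = (\<Sum>i = 0..<n. A $$ (i,i))"
proof -
  define B where "B = schur_upper_triangular A xs"
  have cB: "B \<in> carrier_mat n n" and ut: "upper_triangular B" and sim: "similar_mat A B"
    using schur_upper_triangular[OF cA cp] unfolding B_def by auto
  have "char_poly B = (\<Prod>a\<leftarrow>diag_mat B. [:- a, 1:])" by (rule char_poly_upper_triangular[OF cB ut])
  moreover have "char_poly B = char_poly A" using char_poly_similar[OF sim] by simp
  ultimately have "(\<Prod>a\<leftarrow>diag_mat B. [:- a, 1:]) = (\<Prod>x\<leftarrow>xs. [:- x, 1:])" using cp by simp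
  then have "mset (diag_mat B) = mset xs" by (rule prod_lin_mset)
  then have "sum_list xs = sum_list (diag_mat B)" by (metis sum_mset_sum_list)
  also have "\<dots> = (\<Sum>i = 0..<n. B $$ (i,i))" using cB unfolding diag_mat_def by (simp add: sum_list_sum_nth)
  also have "\<dots> = (\<Sum>i = 0..<n. A $$ (i,i))"
  proof -
    obtain n' P Q where PQ: "{A,B,P,Q} \<subseteq> carrier_mat n' n'" "P * Q = 1\<^sub>m n'" "Q * P = 1\<^sub>m n'" "A = P * B * Q"
      using similar_matD[OF sim] by blast
    then have n': "n' = n" using cA by auto
    have cP: "P \<in> carrier_mat n n" and cQ: "Q \<in> carrier_mat n n" using PQ n' by auto
    have "(\<Sum>i = 0..<n. A $$ (i,i)) = (\<Sum>i = 0..<n. (P * (B * Q)) $$ (i,i))"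
      using PQ(4) cP cB cQ by simp
    also have "\<dots> = (\<Sum>i = 0..<n. ((B * Q) * P) $$ (i,i))"
      by (rule trace_comm) (use cP cB cQ in auto)
    also have "(B * Q) * P = B * (Q * P)" using cP cB cQ by simp
    also have "\<dots> = B" using PQ(3) n' cB by simp
    finally show ?thesis by simp
  qed
  finally show ?thesis .
qed

lemma handshake:
  assumes g: "is_graph n A"
  shows "(\<Sum>i = 0..<n. degree n A i) = 2 * num_edges n A"
proof -
  define E where "E = {(i, j). i < j \<and> j < n \<and> A i j}"
  define E2 where "E2 = {(i, j). j < i \<and> i < n \<and> A i j}"
  have fin: "finite E" "finite E2" unfolding E_def E2_def
    by (rule finite_subset[of _ "{0..<n} \<times> {0..<n}"], auto)+
  have "(\<Sum>i = 0..<n. degree n A i) = (\<Sum>i \<in> {0..<n}. card {j. j < n \<and> A i j})"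
    unfolding degree_def ..
  also have "\<dots> = card (Sigma {0..<n} (\<lambda>i. {j. j < n \<and> A i j}))"
    by (rule card_SigmaI[symmetric]) auto
  also have "Sigma {0..<n} (\<lambda>i. {j. j < n \<and> A i j}) = E \<union> E2"
    using g unfolding E_def E2_def is_graph_def by (auto simp: linorder_neq_iff)
  also have "card (E \<union> E2) = card E + card E2"
    by (rule card_Un_disjoint) (use fin in \<open>auto simp: E_def E2_def\<close>)
  also have "E2 = prod.swap ` E"
    using g unfolding E_def E2_def is_graph_def by auto
  also have "card (prod.swap ` E) = card E" by (rule card_image) simp
  finally show ?thesis unfolding num_edges_def E_def by simp
qed

lemma lap_trace:
  assumes g: "is_graph n A" and cp: "char_poly (laplacian n A) = (\<Prod>x\<leftarrow>xs. [:- x, 1:])"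
  shows "sum_list xs = 2 * real (num_edges n A)"
proof -
  have "sum_list xs = (\<Sum>i = 0..<n. laplacian n A $$ (i,i))"
    by (rule trace_eig[OF _ cp]) (simp add: laplacian_def)
  also have "\<dots> = (\<Sum>i = 0..<n. real (degree n A i))"
    using g by (intro sum.cong refl) (auto simp: laplacian_def is_graph_def)
  also have "\<dots> = real (\<Sum>i = 0..<n. degree n A i)" by simp
  also have "\<dots> = 2 * real (num_edges n A)" unfolding handshake[OF g] by simp
  finally show ?thesis .
qed




lemma perm_bij:
  assumes "mset xs = mset (map f [0..<n])"
  obtains p where "bij_betw p {..<n} {..<n}" "\<And>i. i < n \<Longrightarrow> xs ! i = f (p i)" "length xs = n"
proof -
  have len: "length xs = n" using mset_eq_length[OF assms] by simp
  obtain p where p: "bij_betw p {..<length xs} {..<length (map f [0..<n])}"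
      "\<forall>i<length xs. xs ! i = map f [0..<n] ! (p i)"
    using permutation_Ex_bij[OF assms] by blast
  have b: "bij_betw p {..<n} {..<n}" using p(1) len by simp
  have "xs ! i = f (p i)" if "i < n" for i
  proof -
    have "p i < n" using b that by (auto dest: bij_betw_apply)
    then show ?thesis using p(2) len that by simp
  qed
  then show ?thesis using that b len by blast
qed

lemma sum_take_subset:
  assumes m: "mset xs = mset (map f [0..<n])" and k: "k \<le> n"
  shows "\<exists>S \<subseteq> {0..<n}. card S = k \<and> (\<Sum>i<k. xs!i) = (\<Sum>j\<in>S. f j)"
proof -
  obtain p where b: "bij_betw p {..<n} {..<n}" and xp: "\<And>i. i < n \<Longrightarrow> xs ! i = f (p i)"
    using perm_bij[OF m] by blast
  have inj: "inj_on p {..<k}" by (rule inj_on_subset[OF bij_betw_imp_inj_on[OF b]]) (use k in auto)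
  have pb: "p i < n" if "i < n" for i using bij_betw_apply[OF b] that by auto
  have sub: "p ` {..<k} \<subseteq> {0..<n}" using pb k by auto
  have "(\<Sum>i<k. xs!i) = (\<Sum>i<k. f (p i))" using k xp by simp
  also have "\<dots> = (\<Sum>j\<in>p ` {..<k}. f j)" by (simp add: sum.reindex[OF inj])
  finally show ?thesis using sub card_image[OF inj] by auto
qed

lemma sorted_top_ge:
  fixes xs :: "real list"
  assumes s: "sorted_wrt (\<ge>) xs" and nn: "\<forall>x\<in>set xs. x \<ge> 0"
    and I: "I \<subseteq> {..<length xs}" and cI: "card I \<le> k" and k: "k \<le> length xs"
  shows "(\<Sum>i\<in>I. xs!i) \<le> (\<Sum>i<k. xs!i)"
proof -
  define K where "K = {..<k}"
  define Aa where "Aa = I - K"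
  define Bb where "Bb = K - I"
  have fI: "finite I" using I finite_subset by blast
  have fK: "finite K" unfolding K_def by simp
  have cK: "card K = k" unfolding K_def by simp
  have e1: "(\<Sum>i\<in>I. xs!i) = (\<Sum>i\<in>I \<inter> K. xs!i) + (\<Sum>i\<in>Aa. xs!i)"
    unfolding Aa_def by (rule sum.Int_Diff[OF fI])
  have ik: "K \<inter> I = I \<inter> K" by blast
  have e2: "(\<Sum>i\<in>K. xs!i) = (\<Sum>i\<in>I \<inter> K. xs!i) + (\<Sum>i\<in>Bb. xs!i)"
    unfolding Bb_def ik[symmetric] by (rule sum.Int_Diff[OF fK])
  have c1: "card I = card (I \<inter> K) + card Aa"
    unfolding Aa_def by (rule card_Int_Diff[OF fI])
  have c2: "card K = card (I \<inter> K) + card Bb"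
    unfolding Bb_def ik[symmetric] by (rule card_Int_Diff[OF fK])
  have cAB: "card Aa \<le> card Bb" using c1 c2 cI cK by linarith
  have "(\<Sum>i\<in>Aa. xs!i) \<le> (\<Sum>i\<in>Bb. xs!i)"
  proof (cases "Aa = {}")
    case True
    have "(\<Sum>i\<in>Bb. xs!i) \<ge> 0"
      using nn k unfolding Bb_def K_def by (intro sum_nonneg) auto
    then show ?thesis using True by simp
  next
    case False
    then obtain a where a: "a \<in> Aa" by blast
    then have ak: "k \<le> a" "a < length xs" using I unfolding Aa_def K_def by auto
    define c where "c = xs ! k"
    have kl: "k < length xs" using ak by simp
    have c0: "c \<ge> 0" using nn kl unfolding c_def by auto
    have le1: "xs ! i \<le> c" if "i \<in> Aa" for i
    proof -
      have "k \<le> i" "i < length xs" using that I unfolding Aa_def K_def by auto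
      then show ?thesis unfolding c_def using sorted_wrt_nth_less[OF s, of k i]
        by (cases "k = i") auto
    qed
    have le2: "c \<le> xs ! j" if "j \<in> Bb" for j
    proof -
      have "j < k" using that unfolding Bb_def K_def by auto
      then show ?thesis unfolding c_def using sorted_wrt_nth_less[OF s, of j k] kl by auto
    qed
    have "(\<Sum>i\<in>Aa. xs!i) \<le> (\<Sum>i\<in>Aa. c)" by (rule sum_mono) (rule le1)
    also have "\<dots> = real (card Aa) * c" by simp
    also have "\<dots> \<le> real (card Bb) * c" using cAB c0 by (simp add: mult_right_mono)
    also have "\<dots> = (\<Sum>j\<in>Bb. c)" by simp
    also have "\<dots> \<le> (\<Sum>j\<in>Bb. xs!j)" by (rule sum_mono) (rule le2)
    finally show ?thesis .
  qed
  then show ?thesis using e1 e2 unfolding K_def by linarith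
qed

lemma subset_le_lap:
  fixes xs :: "real list"
  assumes m: "mset xs = mset (map f [0..<n])" and s: "sorted_wrt (\<ge>) xs" and nn: "\<forall>x\<in>set xs. x \<ge> 0"
    and S: "S \<subseteq> {0..<n}" and cS: "card S \<le> k" and k: "k \<le> n"
  shows "(\<Sum>j\<in>S. f j) \<le> (\<Sum>i<k. xs!i)"
proof -
  obtain p where b: "bij_betw p {..<n} {..<n}" and xp: "\<And>i. i < n \<Longrightarrow> xs ! i = f (p i)"
      and len: "length xs = n"
    using perm_bij[OF m] by blast
  define I where "I = {i \<in> {..<n}. p i \<in> S}"
  have Isub: "I \<subseteq> {..<n}" unfolding I_def by blast
  have inj: "inj_on p I" by (rule inj_on_subset[OF bij_betw_imp_inj_on[OF b] Isub])
  have img: "p ` I = S"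
  proof
    show "p ` I \<subseteq> S" unfolding I_def by auto
    show "S \<subseteq> p ` I"
    proof
      fix j assume j: "j \<in> S"
      then have "j \<in> {..<n}" using S by auto
      then have "j \<in> p ` {..<n}" unfolding bij_betw_imp_surj_on[OF b] .
      then obtain i where "i \<in> {..<n}" "p i = j" by (rule imageE) auto
      then show "j \<in> p ` I" unfolding I_def using j by auto
    qed
  qed
  have "(\<Sum>j\<in>S. f j) = (\<Sum>i\<in>I. f (p i))" unfolding img[symmetric] by (simp add: sum.reindex[OF inj])
  also have "\<dots> = (\<Sum>i\<in>I. xs ! i)" by (rule sum.cong) (auto simp: I_def xp)
  also have "\<dots> \<le> (\<Sum>i<k. xs!i)"
  proof (rule sorted_top_ge[OF s nn])
    show "I \<subseteq> {..<length xs}" unfolding I_def len by auto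
    show "card I \<le> k" using card_image[OF inj] img cS by simp
    show "k \<le> length xs" using k len by simp
  qed
  finally show ?thesis .
qed




fun lo :: "nat \<Rightarrow> nat" where
  "lo 0 = 0" | "lo (Suc k) = lo k + Suc k"

lemma lo_choose: "lo k = Suc k choose 2"
  by (induction k) (simp_all add: numeral_2_eq_2)

definition Qs :: "(nat \<Rightarrow> bool) \<Rightarrow> nat \<Rightarrow> nat set" where
  "Qs b n = {u \<in> {1..<n}. b u}"

definition Eb :: "(nat \<Rightarrow> bool) \<Rightarrow> nat \<Rightarrow> nat" where
  "Eb b n = (\<Sum>u \<in> Qs b n. u)"

lemma cnt_Suc: "j < n \<Longrightarrow> cnt b (Suc n) j = cnt b n j + (if b n then 1 else 0)"
proof -
  assume j: "j < n"
  have "{u \<in> {Suc j..<Suc n}. b u} = {u \<in> {Suc j..<n}. b u} \<union> (if b n then {n} else {})"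
    using j by (auto simp: less_Suc_eq)
  then show ?thesis unfolding cnt_def by (simp add: card_insert_if)
qed

lemma cnt_zero: "n \<le> Suc j \<Longrightarrow> cnt b n j = 0"
  unfolding cnt_def by simp

lemma mu_Suc: "j < n \<Longrightarrow> mu b (Suc n) j = mu b n j + (if b n \<and> j \<noteq> 0 then 1 else 0)"
  unfolding mu_def by (simp add: cnt_Suc)

lemma mu_top: "mu b (Suc n) n = (if n = 0 then 0 else if b n then n + 1 else 0)"
  unfolding mu_def by (simp add: cnt_zero)

lemma Qs_Suc: "Qs b (Suc n) = (if b n \<and> n \<noteq> 0 then insert n (Qs b n) else Qs b n)"
  unfolding Qs_def by (auto simp: less_Suc_eq)

lemma Qs_fin: "finite (Qs b n)" unfolding Qs_def by simp

lemma Eb_Suc: "Eb b (Suc n) = Eb b n + (if b n \<and> n \<noteq> 0 then n else 0)"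
  unfolding Eb_def Qs_Suc by (simp add: Qs_fin Qs_def)

lemma mu_sum_le:
  "S \<subseteq> {0..<n} \<Longrightarrow> (\<Sum>j\<in>S. mu b n j) \<le> Eb b n + lo (card S)"
proof (induction n arbitrary: S)
  case 0
  then show ?case by simp
next
  case (Suc n)
  define S' where "S' = S - {n}"
  have S': "S' \<subseteq> {0..<n}" using Suc.prems unfolding S'_def by auto
  have fS': "finite S'" using S' finite_subset by blast
  have cS': "card S' \<le> n" using card_mono[OF _ S'] by simp
  have step: "(\<Sum>j\<in>S'. mu b (Suc n) j) \<le> (\<Sum>j\<in>S'. mu b n j) + (if b n then card S' else 0)"
  proof -
    have "(\<Sum>j\<in>S'. mu b (Suc n) j) \<le> (\<Sum>j\<in>S'. mu b n j + (if b n then 1 else 0))"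
      by (rule sum_mono) (use S' in \<open>auto simp: mu_Suc\<close>)
    also have "\<dots> = (\<Sum>j\<in>S'. mu b n j) + (if b n then card S' else 0)"
      by (simp add: sum.distrib)
    finally show ?thesis .
  qed
  have IH: "(\<Sum>j\<in>S'. mu b n j) \<le> Eb b n + lo (card S')" by (rule Suc.IH[OF S'])
  show ?case
  proof (cases "n \<in> S")
    case False
    then have "S = S'" unfolding S'_def by auto
    then have "(\<Sum>j\<in>S. mu b (Suc n) j) \<le> Eb b n + lo (card S') + (if b n then card S' else 0)"
      using step IH by simp
    also have "\<dots> \<le> Eb b (Suc n) + lo (card S)"
      using \<open>S = S'\<close> cS' by (cases "n = 0") (auto simp: Eb_Suc)
    finally show ?thesis .
  next
    case True
    then have S: "S = insert n S'" and nS': "n \<notin> S'" unfolding S'_def by auto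
    have cS: "card S = Suc (card S')" using S nS' fS' by simp
    have "(\<Sum>j\<in>S. mu b (Suc n) j) = mu b (Suc n) n + (\<Sum>j\<in>S'. mu b (Suc n) j)"
      using S nS' fS' by simp
    also have "\<dots> \<le> mu b (Suc n) n + Eb b n + lo (card S') + (if b n then card S' else 0)"
      using step IH by simp
    also have "\<dots> \<le> Eb b (Suc n) + lo (card S)"
      using cS cS' by (cases "n = 0") (auto simp: Eb_Suc mu_top)
    finally show ?thesis .
  qed
qed

lemma mu_sum_all: "(\<Sum>j = 0..<n. mu b n j) = 2 * Eb b n"
proof (induction n)
  case 0
  then show ?case by (simp add: Eb_def Qs_def)
next
  case (Suc n)
  have "(\<Sum>j = 0..<Suc n. mu b (Suc n) j) = (\<Sum>j = 0..<n. mu b (Suc n) j) + mu b (Suc n) n" by simp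
  also have "(\<Sum>j = 0..<n. mu b (Suc n) j) = (\<Sum>j = 0..<n. mu b n j + (if b n \<and> j \<noteq> 0 then 1 else 0))"
    by (rule sum.cong) (auto simp: mu_Suc)
  also have "\<dots> = (\<Sum>j = 0..<n. mu b n j) + (\<Sum>j = 0..<n. (if b n \<and> j \<noteq> 0 then 1 else 0))"
    by (rule sum.distrib)
  also have "(\<Sum>j = 0..<n. (if b n \<and> j \<noteq> 0 then 1 else 0)) = (if b n then n - 1 else (0::nat))"
  proof (cases "b n")
    case True
    have "(\<Sum>j = 0..<n. (if b n \<and> j \<noteq> 0 then 1 else 0)) = card {j \<in> {0..<n}. j \<noteq> 0}"
      using True by (simp add: sum.If_cases Int_def)
    also have "{j \<in> {0..<n}. j \<noteq> 0} = {1..<n}" by auto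
    finally show ?thesis using True by simp
  qed simp
  finally show ?case using Suc.IH by (cases "n = 0") (auto simp: Eb_Suc mu_top)
qed

lemma mu_sum_Qs: "(\<Sum>j\<in>Qs b n. mu b n j) = Eb b n + lo (card (Qs b n))"
proof (induction n)
  case 0
  then show ?case by (simp add: Eb_def Qs_def)
next
  case (Suc n)
  have sub: "Qs b n \<subseteq> {0..<n}" unfolding Qs_def by auto
  have pos: "j \<noteq> 0" if "j \<in> Qs b n" for j using that unfolding Qs_def by auto
  have eq: "(\<Sum>j\<in>Qs b n. mu b (Suc n) j) = (\<Sum>j\<in>Qs b n. mu b n j) + (if b n then card (Qs b n) else 0)"
  proof -
    have "(\<Sum>j\<in>Qs b n. mu b (Suc n) j) = (\<Sum>j\<in>Qs b n. mu b n j + (if b n then 1 else 0))"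
      by (rule sum.cong) (use sub pos in \<open>auto simp: mu_Suc\<close>)
    then show ?thesis by (simp add: sum.distrib)
  qed
  show ?case
  proof (cases "b n \<and> n \<noteq> 0")
    case True
    have nQ: "n \<notin> Qs b n" unfolding Qs_def by auto
    have "(\<Sum>j\<in>Qs b (Suc n). mu b (Suc n) j) = mu b (Suc n) n + (\<Sum>j\<in>Qs b n. mu b (Suc n) j)"
      unfolding Qs_Suc using True nQ Qs_fin by simp
    also have "\<dots> = Eb b (Suc n) + lo (card (Qs b (Suc n)))"
      unfolding eq Suc.IH using True nQ Qs_fin by (simp add: Qs_Suc Eb_Suc mu_top)
    finally show ?thesis .
  next
    case False
    then have "Qs b n = {} \<or> \<not> b n"
      unfolding Qs_def by auto
    then show ?thesis using eq Suc.IH False by (auto simp: Qs_Suc Eb_Suc)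
  qed
qed

lemma mu_zero_above:
  assumes "\<And>u. N < u \<Longrightarrow> u < n \<Longrightarrow> \<not> b u" "N < j" "j < n"
  shows "mu b n j = 0"
proof -
  have "{u \<in> {Suc j..<n}. b u} = {}" using assms by auto
  then show ?thesis using assms unfolding mu_def cnt_def by auto
qed

lemma mu_top_block:
  assumes "\<And>u. n - k \<le> u \<Longrightarrow> u < n \<Longrightarrow> b u" "k < n" "n - k \<le> j" "j < n"
  shows "mu b n j = n"
proof -
  have "{u \<in> {Suc j..<n}. b u} = {Suc j..<n}" using assms by auto
  then have "cnt b n j = n - Suc j" unfolding cnt_def by simp
  moreover have "b j" "j \<noteq> 0" using assms by auto
  ultimately show ?thesis unfolding mu_def using assms by simp
qed




lemma subset_sum_exists: "m \<le> lo N \<Longrightarrow> \<exists>Q \<subseteq> {1..N}. \<Sum>Q = m"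
proof (induction N arbitrary: m)
  case 0
  then show ?case by (intro exI[of _ "{}"]) simp
next
  case (Suc N)
  show ?case
  proof (cases "m \<le> lo N")
    case True
    then obtain Q where "Q \<subseteq> {1..N}" "\<Sum>Q = m" using Suc.IH by blast
    then show ?thesis by (intro exI[of _ Q]) auto
  next
    case False
    then have "m - Suc N \<le> lo N" using Suc.prems by simp
    then obtain Q where Q: "Q \<subseteq> {1..N}" "\<Sum>Q = m - Suc N" using Suc.IH by blast
    have nQ: "Suc N \<notin> Q" using Q by auto
    have fQ: "finite Q" using Q finite_subset by blast
    have "N \<le> lo N" by (induction N) auto
    then have "\<Sum>(insert (Suc N) Q) = m" using nQ fQ Q False by simp
    moreover have "insert (Suc N) Q \<subseteq> {1..Suc N}" using Q by auto
    ultimately show ?thesis by blast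
  qed
qed

fun hi :: "nat \<Rightarrow> nat \<Rightarrow> nat" where
  "hi N 0 = 0" | "hi N (Suc k) = N + hi (N - 1) k"

lemma lo_le_hi: "k \<le> N \<Longrightarrow> lo k \<le> hi N k"
proof (induction k arbitrary: N)
  case 0 then show ?case by simp
next
  case (Suc k)
  then have "lo k \<le> hi (N - 1) k" by simp
  then show ?case using Suc.prems by simp
qed

lemma subset_card_sum_exists:
  "k \<le> N \<Longrightarrow> lo k \<le> m \<Longrightarrow> m \<le> hi N k \<Longrightarrow> \<exists>Q \<subseteq> {1..N}. card Q = k \<and> \<Sum>Q = m"
proof (induction N arbitrary: k m)
  case 0
  then show ?case by (intro exI[of _ "{}"]) simp
next
  case (Suc N)
  show ?case
  proof (cases k)
    case 0
    then show ?thesis using Suc.prems by (intro exI[of _ "{}"]) simp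
  next
    case (Suc k')
    show ?thesis
    proof (cases "k \<le> N \<and> m \<le> hi N k")
      case True
      then obtain Q where "Q \<subseteq> {1..N}" "card Q = k" "\<Sum>Q = m" using Suc.IH Suc.prems by blast
      then show ?thesis by (intro exI[of _ Q]) auto
    next
      case False
      have up: "m - Suc N \<le> hi N k'" using Suc.prems \<open>k = Suc k'\<close> by simp
      have low: "lo k' \<le> m - Suc N"
      proof (cases "k = Suc N")
        case True
        then show ?thesis using Suc.prems \<open>k = Suc k'\<close> by simp
      next
        case kN: False
        then have kle: "k \<le> N" using Suc.prems by simp
        then have mgt: "m > hi N k" using False by simp
        have "lo k' \<le> hi (N - 1) k'" using kle \<open>k = Suc k'\<close> by (intro lo_le_hi) simp
        then show ?thesis using mgt \<open>k = Suc k'\<close> by simp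
      qed
      have k'N: "k' \<le> N" using Suc.prems \<open>k = Suc k'\<close> by simp
      obtain Q where Q: "Q \<subseteq> {1..N}" "card Q = k'" "\<Sum>Q = m - Suc N"
        using Suc.IH[OF k'N low up] by blast
      have nQ: "Suc N \<notin> Q" using Q by auto
      have fQ: "finite Q" using Q finite_subset by blast
      have mge: "m \<ge> Suc N"
      proof -
        have "lo k \<ge> Suc k'" using \<open>k = Suc k'\<close> by simp
        show ?thesis
        proof (cases "k = Suc N")
          case True then show ?thesis using Suc.prems \<open>lo k \<ge> Suc k'\<close> \<open>k = Suc k'\<close> by simp
        next
          case False
          then have "k \<le> N" using Suc.prems by simp
          then have "m > hi N k" using \<open>\<not> (k \<le> N \<and> m \<le> hi N k)\<close> by simp
          moreover have "hi N k \<ge> N" using \<open>k = Suc k'\<close> by simp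
          ultimately show ?thesis by simp
        qed
      qed
      have "\<Sum>(insert (Suc N) Q) = m" using nQ fQ Q mge by simp
      moreover have "card (insert (Suc N) Q) = k" using nQ fQ Q \<open>k = Suc k'\<close> by simp
      moreover have "insert (Suc N) Q \<subseteq> {1..Suc N}" using Q by auto
      ultimately show ?thesis by blast
    qed
  qed
qed

lemma topset: "k \<le> N \<Longrightarrow> \<Sum>{Suc N - k..N} = hi N k \<and> card {Suc N - k..N} = k"
proof (induction k arbitrary: N)
  case 0 then show ?case by simp
next
  case (Suc k)
  have kN: "k \<le> N - 1" using Suc.prems by simp
  note IH = Suc.IH[OF kN]
  have N: "N \<ge> 1" using Suc.prems by simp
  have e: "{Suc N - Suc k..N} = insert N {Suc (N - 1) - k..N - 1}" using Suc.prems by auto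
  have "N \<notin> {Suc (N - 1) - k..N - 1}" using N by auto
  then show ?case unfolding e using IH Suc.prems N by simp
qed

lemma lo_split: "k \<le> N \<Longrightarrow> lo N = lo (N - k) + hi N k"
proof (induction k arbitrary: N)
  case 0 then show ?case by simp
next
  case (Suc k)
  then obtain N' where N': "N = Suc N'" by (cases N) auto
  have "lo N' = lo (N' - k) + hi N' k" using Suc N' by simp
  then show ?case using N' by simp
qed

lemma two_lo: "2 * lo k = k * Suc k"
  by (induction k) auto




lemma thr_spec:
  assumes vs: "distinct vs" "set vs = {0..<n}" "length vs = n"
    and T: "\<forall>i<n. \<forall>j<n. T (vs!i) (vs!j) \<longleftrightarrow> tp b i j"
    and g: "is_graph n T"
  shows "mset (lap_eigs n T) = mset (map (\<lambda>j. real (mu b n j)) [0..<n])"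
    "sorted_wrt (\<ge>) (lap_eigs n T)" "length (lap_eigs n T) = n"
    "num_edges n T = Eb b n"
proof -
  have cp: "char_poly (laplacian n T) = (\<Prod>x\<leftarrow>map (\<lambda>j. real (mu b n j)) [0..<n]. [:- x, 1:])"
    using threshold_char_poly[OF vs T] by (simp add: o_def)
  show "mset (lap_eigs n T) = mset (map (\<lambda>j. real (mu b n j)) [0..<n])"
    "sorted_wrt (\<ge>) (lap_eigs n T)" "length (lap_eigs n T) = n"
    using lap_eigs_perm[OF _ cp] by auto
  have "sum_list (map (\<lambda>j. real (mu b n j)) [0..<n]) = 2 * real (num_edges n T)"
    by (rule lap_trace[OF g cp])
  moreover have "sum_list (map (\<lambda>j. real (mu b n j)) [0..<n]) = real (\<Sum>j = 0..<n. mu b n j)"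
    by (simp add: sum_list_distinct_conv_sum_set)
  ultimately have "real (\<Sum>j = 0..<n. mu b n j) = 2 * real (num_edges n T)" by simp
  then show "num_edges n T = Eb b n" unfolding mu_sum_all by linarith
qed

lemma gen_spec:
  assumes g: "is_graph n G"
  shows "sorted_wrt (\<ge>) (lap_eigs n G)" "length (lap_eigs n G) = n"
    "\<forall>x\<in>set (lap_eigs n G). 0 \<le> x \<and> x \<le> real n"
    "sum_list (lap_eigs n G) = 2 * real (num_edges n G)"
proof -
  obtain rs where rs: "length rs = n" "char_poly (laplacian n G) = (\<Prod>x\<leftarrow>rs. [:- x, 1:])"
    "\<forall>r\<in>set rs. 0 \<le> r \<and> r \<le> real n"
    using lap_eigs_general[OF g] by blast
  note p = lap_eigs_perm[OF rs(1,2)]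
  show "sorted_wrt (\<ge>) (lap_eigs n G)" "length (lap_eigs n G) = n" using p by auto
  have "set (lap_eigs n G) = set rs" using p(1) by (metis set_mset_mset)
  then show "\<forall>x\<in>set (lap_eigs n G). 0 \<le> x \<and> x \<le> real n" using rs(3) by simp
  have "sum_list (lap_eigs n G) = sum_list rs" using p(1) by (metis sum_mset_sum_list)
  also have "\<dots> = 2 * real (num_edges n G)" by (rule lap_trace[OF g rs(2)])
  finally show "sum_list (lap_eigs n G) = 2 * real (num_edges n G)" .
qed

lemma edges_le: assumes g: "is_graph n A" shows "num_edges n A \<le> lo (n - 1)"
proof -
  have d: "degree n A i \<le> n - 1" if "i < n" for i
  proof -
    have "{j. j < n \<and> A i j} \<subseteq> {0..<n} - {i}" using g unfolding is_graph_def by auto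
    then have "card {j. j < n \<and> A i j} \<le> card ({0..<n} - {i})" by (intro card_mono) auto
    then show ?thesis unfolding degree_def using that by simp
  qed
  have "2 * num_edges n A = (\<Sum>i = 0..<n. degree n A i)" using handshake[OF g] by simp
  also have "\<dots> \<le> (\<Sum>i = 0..<n. n - 1)" by (rule sum_mono) (use d in auto)
  also have "\<dots> = n * (n - 1)" by simp
  also have "\<dots> = 2 * lo (n - 1)" using two_lo[of "n - 1"] by (cases n) auto
  finally show ?thesis by simp
qed




definition mkT :: "nat \<Rightarrow> nat set \<Rightarrow> nat \<Rightarrow> nat \<Rightarrow> bool" where
  "mkT n Q i j \<longleftrightarrow> i < n \<and> j < n \<and> tp (\<lambda>u. u \<in> Q) i j"

lemma mkT_facts:
  assumes Q: "Q \<subseteq> {1..<n}"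
  shows "is_threshold n (mkT n Q)"
    "mset (lap_eigs n (mkT n Q)) = mset (map (\<lambda>j. real (mu (\<lambda>u. u \<in> Q) n j)) [0..<n])"
    "sorted_wrt (\<ge>) (lap_eigs n (mkT n Q))" "length (lap_eigs n (mkT n Q)) = n"
    "num_edges n (mkT n Q) = \<Sum>Q"
proof -
  have g: "is_graph n (mkT n Q)" unfolding is_graph_def mkT_def tp_def by auto
  have vs: "distinct [0..<n]" "set [0..<n] = {0..<n}" "length [0..<n] = n" by auto
  have T: "\<forall>i<n. \<forall>j<n. mkT n Q ([0..<n]!i) ([0..<n]!j) \<longleftrightarrow> tp (\<lambda>u. u \<in> Q) i j"
    unfolding mkT_def by simp
  note th = thr_spec[OF vs T g]
  show "mset (lap_eigs n (mkT n Q)) = mset (map (\<lambda>j. real (mu (\<lambda>u. u \<in> Q) n j)) [0..<n])"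
    "sorted_wrt (\<ge>) (lap_eigs n (mkT n Q))" "length (lap_eigs n (mkT n Q)) = n" using th by auto
  have "Qs (\<lambda>u. u \<in> Q) n = Q" using Q unfolding Qs_def by auto
  then show "num_edges n (mkT n Q) = \<Sum>Q" using th(4) unfolding Eb_def by simp
  show "is_threshold n (mkT n Q)"
    unfolding is_threshold_def
  proof (intro conjI exI)
    show "is_graph n (mkT n Q)" by (rule g)
    show "distinct [0..<n]" "set [0..<n] = {0..<n}" "length (map (\<lambda>u. u \<in> Q) [0..<n]) = n" by auto
    show "\<forall>i<n. \<forall>j<n. mkT n Q ([0..<n] ! i) ([0..<n] ! j) =
      (i < j \<and> map (\<lambda>u. u \<in> Q) [0..<n] ! j \<or> j < i \<and> map (\<lambda>u. u \<in> Q) [0..<n] ! i)"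
      unfolding mkT_def tp_def by auto
  qed
qed

lemma lap_sum_ge_subset:
  assumes Q: "Q \<subseteq> {1..<n}" and S: "S \<subseteq> {0..<n}" "card S \<le> k" and k: "k \<le> n"
  shows "real (\<Sum>j\<in>S. mu (\<lambda>u. u \<in> Q) n j) \<le> lap_sum n (mkT n Q) k"
proof -
  note f = mkT_facts[OF Q]
  have nn: "\<forall>x\<in>set (lap_eigs n (mkT n Q)). x \<ge> 0"
    using f(2) by (metis (no_types, lifting) ex_map_conv of_nat_0_le_iff set_mset_mset)
  have "(\<Sum>j\<in>S. real (mu (\<lambda>u. u \<in> Q) n j)) \<le> (\<Sum>i<k. lap_eigs n (mkT n Q) ! i)"
    by (rule subset_le_lap[OF f(2) f(3) nn S k])
  then show ?thesis unfolding lap_sum_def by simp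
qed

lemma lap_sum_le_2m:
  assumes g: "is_graph n G" and k: "k \<le> n"
  shows "lap_sum n G k \<le> 2 * real (num_edges n G)"
proof -
  note s = gen_spec[OF g]
  have "lap_sum n G k = (\<Sum>i\<in>{0..<k}. lap_eigs n G ! i)" unfolding lap_sum_def by (simp add: atLeast0LessThan)
  also have "\<dots> \<le> (\<Sum>i\<in>{0..<n}. lap_eigs n G ! i)"
    by (rule sum_mono2) (use k s(2,3) in \<open>auto dest: nth_mem\<close>)
  also have "\<dots> = sum_list (lap_eigs n G)" using s(2) by (simp add: sum_list_sum_nth)
  finally show ?thesis using s(4) by simp
qed

lemma lap_sum_le_kn:
  assumes g: "is_graph n G" and k: "k \<le> n"
  shows "lap_sum n G k \<le> real k * real n"
proof -
  note s = gen_spec[OF g]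
  have "lap_sum n G k \<le> (\<Sum>i<k. real n)" unfolding lap_sum_def
    by (rule sum_mono) (use k s(2,3) in \<open>auto dest: nth_mem\<close>)
  then show ?thesis by simp
qed

theorem theorem4:
  fixes n m :: nat and G :: "nat \<Rightarrow> nat \<Rightarrow> bool"
  assumes "is_graph n G" and "m = num_edges n G"
  shows "(\<forall>k \<in> {1..n}. lap_sum n G k \<le> real m + real ((k + 1) choose 2))
         \<longleftrightarrow> spectrally_threshold_dominated n G"
proof
  assume H: "\<forall>k \<in> {1..n}. lap_sum n G k \<le> real m + real ((k + 1) choose 2)"
  have mle: "m \<le> lo (n - 1)" using edges_le[OF assms(1)] assms(2) by simp
  show "spectrally_threshold_dominated n G"
    unfolding spectrally_threshold_dominated_def
  proof
    fix k assume kk: "k \<in> {1..n}"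
    then have k1: "1 \<le> k" and kn: "k \<le> n" by auto
    have Hk: "lap_sum n G k \<le> real m + real (lo k)" using H kk by (simp add: lo_choose)
    show "\<exists>T. is_threshold n T \<and> num_edges n T = num_edges n G \<and> lap_sum n G k \<le> lap_sum n T k"
    proof (cases "m \<le> lo k")
      case True
      define N where "N = min k (n - 1)"
      have "m \<le> lo N"
      proof (cases "k \<le> n - 1")
        case True then show ?thesis using \<open>m \<le> lo k\<close> unfolding N_def by simp
      next
        case False then show ?thesis using mle unfolding N_def by simp
      qed
      then obtain Q where Q: "Q \<subseteq> {1..N}" "\<Sum>Q = m" using subset_sum_exists by blast
      have Q': "Q \<subseteq> {1..<n}"
      proof
        fix x assume "x \<in> Q"
        then have "x \<in> {1..N}" using Q(1) by blast
        then show "x \<in> {1..<n}" using kn k1 unfolding N_def by auto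
      qed
      note f = mkT_facts[OF Q']
      let ?b = "\<lambda>u. u \<in> Q"
      have S: "{1..N} \<subseteq> {0..<n}" "card {1..N} \<le> k" unfolding N_def using kn k1 by auto
      have "(\<Sum>j\<in>{1..N}. mu ?b n j) = (\<Sum>j\<in>{0..<n}. mu ?b n j)"
      proof (rule sum.mono_neutral_left)
        show "finite {0..<n}" by simp
        show "{1..N} \<subseteq> {0..<n}" by (rule S(1))
        show "\<forall>i\<in>{0..<n} - {1..N}. mu ?b n i = 0"
        proof
          fix j assume j: "j \<in> {0..<n} - {1..N}"
          show "mu ?b n j = 0"
          proof (cases "j = 0")
            case True then show ?thesis by (simp add: mu_def)
          next
            case False
            then have "N < j" "j < n" using j by auto
            then show ?thesis using Q(1) by (intro mu_zero_above[of N n ?b j]) auto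
          qed
        qed
      qed
      also have "\<dots> = 2 * Eb ?b n" by (rule mu_sum_all)
      also have "Eb ?b n = m"
      proof -
        have "Qs ?b n = Q" using Q' unfolding Qs_def by auto
        then show ?thesis unfolding Eb_def using Q(2) by simp
      qed
      finally have "(\<Sum>j\<in>{1..N}. mu ?b n j) = 2 * m" .
      then have "real (2 * m) \<le> lap_sum n (mkT n Q) k"
        using lap_sum_ge_subset[OF Q' S kn] by simp
      moreover have "lap_sum n G k \<le> 2 * real m" using lap_sum_le_2m[OF assms(1) kn] assms(2) by simp
      ultimately show ?thesis using f(1,5) Q(2) assms(2) by (intro exI[of _ "mkT n Q"]) auto
    next
      case False
      have kn': "k < n"
      proof (rule ccontr)
        assume "\<not> k < n" then have "k = n" using kn by simp
        then have "lo (n - 1) \<le> lo k" by (cases n) auto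
        then show False using False mle by simp
      qed
      show ?thesis
      proof (cases "m \<le> hi (n - 1) k")
        case True
        have "\<exists>Q \<subseteq> {1..n-1}. card Q = k \<and> \<Sum>Q = m"
          using subset_card_sum_exists[of k "n - 1" m] kn' False True by simp
        then obtain Q where Q: "Q \<subseteq> {1..n-1}" "card Q = k" "\<Sum>Q = m" by blast
        have Q': "Q \<subseteq> {1..<n}"
        proof
          fix x assume "x \<in> Q"
          with Q(1) have "x \<in> {1..n-1}" by blast
          then show "x \<in> {1..<n}" using kn' by auto
        qed
        note f = mkT_facts[OF Q']
        let ?b = "\<lambda>u. u \<in> Q"
        have QQ: "Qs ?b n = Q" using Q' unfolding Qs_def by auto
        have "real (\<Sum>j\<in>Q. mu ?b n j) \<le> lap_sum n (mkT n Q) k"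
          by (rule lap_sum_ge_subset[OF Q']) (use Q' Q(2) kn in auto)
        moreover have "(\<Sum>j\<in>Q. mu ?b n j) = m + lo k"
          using mu_sum_Qs[of ?b n] unfolding QQ Eb_def Q(2,3) .
        ultimately have "real m + real (lo k) \<le> lap_sum n (mkT n Q) k" by simp
        then show ?thesis using Hk f(1,5) Q(3) assms(2) by (intro exI[of _ "mkT n Q"]) auto
      next
        case hiF: False
        have "m - hi (n - 1) k \<le> lo (n - 1 - k)"
          using lo_split[of k "n - 1"] kn' mle by simp
        then obtain Q2 where Q2: "Q2 \<subseteq> {1..n - 1 - k}" "\<Sum>Q2 = m - hi (n - 1) k"
          using subset_sum_exists by blast
        define Tp where "Tp = {Suc (n - 1) - k..n - 1}"
        have tp: "\<Sum>Tp = hi (n - 1) k" "card Tp = k" using topset[of k "n - 1"] kn' unfolding Tp_def by auto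
        define Q where "Q = Tp \<union> Q2"
        have disj: "Tp \<inter> Q2 = {}"
        proof -
          have "Tp \<inter> {1..n - 1 - k} = {}" unfolding Tp_def using kn' by auto
          then show ?thesis using Q2(1) by blast
        qed
        have fin: "finite Tp" "finite Q2" unfolding Tp_def using Q2(1) finite_subset by auto
        have sQ: "\<Sum>Q = m" unfolding Q_def using sum.union_disjoint[OF fin disj, of id] tp(1) Q2(2) hiF by simp
        have Q': "Q \<subseteq> {1..<n}"
        proof
          fix x assume "x \<in> Q"
          then have "x \<in> Tp \<or> x \<in> {1..n - 1 - k}" unfolding Q_def using Q2(1) by blast
          then show "x \<in> {1..<n}" unfolding Tp_def using kn' by auto
        qed
        note f = mkT_facts[OF Q']
        let ?b = "\<lambda>u. u \<in> Q"
        have Tp_sub: "Tp \<subseteq> {0..<n}" unfolding Tp_def using kn' by auto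
        have "real (\<Sum>j\<in>Tp. mu ?b n j) \<le> lap_sum n (mkT n Q) k"
          by (rule lap_sum_ge_subset[OF Q' Tp_sub]) (use tp(2) kn in auto)
        moreover have "(\<Sum>j\<in>Tp. mu ?b n j) = k * n"
        proof -
          have "(\<Sum>j\<in>Tp. mu ?b n j) = (\<Sum>j\<in>Tp. n)"
          proof (rule sum.cong)
            fix j assume j: "j \<in> Tp"
            show "mu ?b n j = n"
            proof (rule mu_top_block[of n k ?b j])
              show "\<And>u. n - k \<le> u \<Longrightarrow> u < n \<Longrightarrow> u \<in> Q" unfolding Q_def Tp_def using kn' by auto
              show "k < n" by (rule kn')
              show "n - k \<le> j" "j < n" using j kn' unfolding Tp_def by auto
            qed
          qed simp
          then show ?thesis using tp(2) by simp
        qed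
        ultimately have "real k * real n \<le> lap_sum n (mkT n Q) k" by simp
        moreover have "lap_sum n G k \<le> real k * real n" by (rule lap_sum_le_kn[OF assms(1) kn])
        ultimately show ?thesis using f(1,5) sQ assms(2) by (intro exI[of _ "mkT n Q"]) auto
      qed
    qed
  qed
next
  assume D: "spectrally_threshold_dominated n G"
  show "\<forall>k \<in> {1..n}. lap_sum n G k \<le> real m + real ((k + 1) choose 2)"
  proof
    fix k assume kk: "k \<in> {1..n}"
    then have kn: "k \<le> n" by simp
    obtain T where T: "is_threshold n T" "num_edges n T = num_edges n G" "lap_sum n G k \<le> lap_sum n T k"
      using D kk unfolding spectrally_threshold_dominated_def by blast
    obtain vs bs where vb: "distinct vs" "set vs = {0..<n}" "length bs = n"
      "\<forall>i<n. \<forall>j<n. T (vs ! i) (vs ! j) \<longleftrightarrow> (i < j \<and> bs ! j) \<or> (j < i \<and> bs ! i)"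
      and g: "is_graph n T"
      using T(1) unfolding is_threshold_def by blast
    have lvs: "length vs = n" using vb(1,2) by (metis atLeastLessThan_upt distinct_card card_atLeastLessThan diff_zero)
    let ?b = "\<lambda>j. bs ! j"
    have Tt: "\<forall>i<n. \<forall>j<n. T (vs!i) (vs!j) \<longleftrightarrow> tp ?b i j" using vb(4) unfolding tp_def by blast
    note th = thr_spec[OF vb(1,2) lvs Tt g]
    obtain S where S: "S \<subseteq> {0..<n}" "card S = k" "(\<Sum>i<k. lap_eigs n T ! i) = (\<Sum>j\<in>S. real (mu ?b n j))"
      using sum_take_subset[OF th(1) kn] by blast
    have "lap_sum n T k = real (\<Sum>j\<in>S. mu ?b n j)" unfolding lap_sum_def S(3) by simp
    also have "\<dots> \<le> real (Eb ?b n + lo (card S))" using mu_sum_le[OF S(1), of ?b] by (simp only: of_nat_le_iff)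
    also have "\<dots> = real m + real ((k + 1) choose 2)" using th(4) T(2) assms(2) S(2) by (simp add: lo_choose)
    finally show "lap_sum n G k \<le> real m + real ((k + 1) choose 2)" using T(3) by simp
  qed
qed


end
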